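(* Let $\mathbb{A}\in\{\mathtt{p2p},\mathtt{sb},\mathtt{bag}\}$. For every $\rho\in\Gamma^*$ and every $w\in\Sigma^*$ such that $w$ is $\mathbb{A}$-channel-compliant and agrees with $\rho$, there exists $u\in\Sigma^*$ such that $wu$ is $\mathbb{A}$-channel-compliant and $wu\equiv\mathrm{split}(\rho)$.
   Context: $\mathcal{P}$ is a set of participants and $\mathcal{V}$ a set of message values. $\Gamma=\{p\to q:m\mid p,q\in\mathcal{P},m\in\mathcal{V}\}$. $\Sigma=\Sigma_!\cup\Sigma_?$ with $\mathsf{snd}(p,q,m)$ ($p$ sends $m$ to $q$) and $\mathsf{rcv}(p,q,m)$ ($q$ receives $m$ from $p$); $\Sigma_p$ = send events with sender $p$ and receive events with receiver $p$. $w\Downarrow_\Delta$ deletes letters outside $\Delta$; $\le$ is the prefix order. $\mathrm{split}$ is the homomorphism with $p\to q:m\mapsto\mathsf{snd}(p,q,m)\mathsf{rcv}(p,q,m)$. $w\equiv w'$ iff $w\Downarrow_{\Sigma_p}=w'\Downarrow_{\Sigma_p}$ for all $p$. $w$ agrees with $\rho$ if $w\Downarrow_{\Sigma_p}\le\mathrm{split}(\rho)\Downarrow_{\Sigma_p}$ for all $p$. A network architecture consists of channels $C$, a map $\xi:\mathcal{P}\times\mathcal{P}\to C$, a buffer type with contents $B$, empty contents $b_0$ and partial operations $\mathit{insert}(\mu),\mathit{remove}(\mu):B\rightharpoonup B$ for messages $\mu\in M=\mathcal{P}\times\mathcal{P}\times\mathcal{V}$. Starting with every channel holding $b_0$, letter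 $\mathsf{snd}(p,q,m)$ applies $\mathit{insert}((p,q,m))$ to channel $\xi(p,q)$ and $\mathsf{rcv}(p,q,m)$ applies $\mathit{remove}((p,q,m))$ to channel $\xi(p,q)$; $w\in\Sigma^*$ is channel-compliant if all these applications are defined. FIFO buffers: $B=M^*$, $b_0=\varepsilon$, $\mathit{insert}(\mu)(b)=b\mu$, $\mathit{remove}(\mu)(b)$ defined iff $b=\mu b'$, then equal to $b'$. Bag buffers: $B$ = finite multisets over $M$, $b_0=\emptyset$, insert adds one copy, $\mathit{remove}(\mu)$ defined iff $\mu$ occurs, removing one copy. $\mathtt{p2p}$: FIFO, $C=\mathcal{P}\times\mathcal{P}$, $\xi(p,q)=(p,q)$. $\mathtt{sb}$ (senderbox): FIFO, $C=\mathcal{P}$, $\xi(p,q)=p$. $\mathtt{bag}$: bag buffers with a single channel ($\xi$ constant). *)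

theory Defs
  imports Main "HOL-Library.Multiset" "HOL-Library.Sublist"
begin

text \<open>Messages (letters of Gamma): p \<rightarrow> q : m\<close>
datatype ('p, 'v) msg = Msg 'p 'p 'v

text \<open>Events (letters of Sigma): snd(p,q,m) and rcv(p,q,m)\<close>
datatype ('p, 'v) event = Snd 'p 'p 'v | Rcv 'p 'p 'v

definition split :: "('p, 'v) msg list \<Rightarrow> ('p, 'v) event list" where
  "split \<rho> = concat (map (\<lambda>x. case x of Msg p q m \<Rightarrow> [Snd p q m, Rcv p q m]) \<rho>)"

fun in_Sigma :: "'p \<Rightarrow> ('p, 'v) event \<Rightarrow> bool" where
  "in_Sigma r (Snd p q m) = (p = r)"
| "in_Sigma r (Rcv p q m) = (q = r)"

definition proj :: "'p \<Rightarrow> ('p, 'v) event list \<Rightarrow> ('p, 'v) event list" where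
  "proj p w = filter (in_Sigma p) w"

definition equiv_words :: "('p, 'v) event list \<Rightarrow> ('p, 'v) event list \<Rightarrow> bool" where
  "equiv_words w w' = (\<forall>p. proj p w = proj p w')"

definition agrees :: "('p, 'v) event list \<Rightarrow> ('p, 'v) msg list \<Rightarrow> bool" where
  "agrees w \<rho> = (\<forall>p. prefix (proj p w) (proj p (split \<rho>)))"

fun exec :: "('p \<Rightarrow> 'p \<Rightarrow> 'c) \<Rightarrow> ('p \<times> 'p \<times> 'v \<Rightarrow> 'b \<Rightarrow> 'b option)
    \<Rightarrow> ('p \<times> 'p \<times> 'v \<Rightarrow> 'b \<Rightarrow> 'b option) \<Rightarrow> ('c \<Rightarrow> 'b) \<Rightarrow> ('p, 'v) event list \<Rightarrow> ('c \<Rightarrow> 'b) option" where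
  "exec xi ins rem s [] = Some s"
| "exec xi ins rem s (Snd p q m # w) =
     (case ins (p, q, m) (s (xi p q)) of None \<Rightarrow> None
      | Some b \<Rightarrow> exec xi ins rem (s(xi p q := b)) w)"
| "exec xi ins rem s (Rcv p q m # w) =
     (case rem (p, q, m) (s (xi p q)) of None \<Rightarrow> None
      | Some b \<Rightarrow> exec xi ins rem (s(xi p q := b)) w)"

definition channel_compliant :: "('p \<Rightarrow> 'p \<Rightarrow> 'c) \<Rightarrow> ('p \<times> 'p \<times> 'v \<Rightarrow> 'b \<Rightarrow> 'b option)
    \<Rightarrow> ('p \<times> 'p \<times> 'v \<Rightarrow> 'b \<Rightarrow> 'b option) \<Rightarrow> 'b \<Rightarrow> ('p, 'v) event list \<Rightarrow> bool" where
  "channel_compliant xi ins rem b0 w = (exec xi ins rem (\<lambda>_. b0) w \<noteq> None)"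

definition fifo_insert :: "'a \<Rightarrow> 'a list \<Rightarrow> 'a list option" where
  "fifo_insert \<mu> b = Some (b @ [\<mu>])"

definition fifo_remove :: "'a \<Rightarrow> 'a list \<Rightarrow> 'a list option" where
  "fifo_remove \<mu> b = (case b of [] \<Rightarrow> None | x # b' \<Rightarrow> if x = \<mu> then Some b' else None)"

definition bag_insert :: "'a \<Rightarrow> 'a multiset \<Rightarrow> 'a multiset option" where
  "bag_insert \<mu> B = Some (add_mset \<mu> B)"

definition bag_remove :: "'a \<Rightarrow> 'a multiset \<Rightarrow> 'a multiset option" where
  "bag_remove \<mu> B = (if \<mu> \<in># B then Some (B - {#\<mu>#}) else None)"

datatype arch = P2P | SB | BAG

definition compliant :: "arch \<Rightarrow> ('p, 'v) event list \<Rightarrow> bool" where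
  "compliant A w = (case A of
      P2P \<Rightarrow> channel_compliant (\<lambda>p q. (p, q)) fifo_insert fifo_remove [] w
    | SB \<Rightarrow> channel_compliant (\<lambda>p q. p) fifo_insert fifo_remove [] w
    | BAG \<Rightarrow> channel_compliant (\<lambda>p q. ()) bag_insert bag_remove {#} w)"

end

theory Submission
  imports Defs
begin

fun owner :: "('p, 'v) event \<Rightarrow> 'p" where
  "owner (Snd p q m) = p"
| "owner (Rcv p q m) = q"

lemma in_Sigma_owner: "in_Sigma r e = (owner e = r)"
  by (cases e) auto

lemma count_proj: "count (mset (proj (owner e) xs)) e = count (mset xs) e"
  unfolding proj_def by (simp add: mset_filter in_Sigma_owner)

lemma prefix_count: "prefix xs ys \<Longrightarrow> count (mset xs) e \<le> count (mset ys) e"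
  by (auto simp: prefix_def)

lemma mset_sub:
  assumes "\<forall>r. prefix (proj r xs) (proj r ys)"
  shows "mset xs \<subseteq># mset ys"
  unfolding subseteq_mset_def
proof
  fix e
  have "count (mset (proj (owner e) xs)) e \<le> count (mset (proj (owner e) ys)) e"
    using assms[rule_format, of "owner e"] by (rule prefix_count)
  then show "count (mset xs) e \<le> count (mset ys) e" by (simp add: count_proj)
qed

lemma proj_append[simp]: "proj r (xs @ ys) = proj r xs @ proj r ys"
  by (simp add: proj_def)

lemma proj_Nil[simp]: "proj r [] = []"
  by (simp add: proj_def)

lemma proj_single[simp]: "proj r [e] = (if in_Sigma r e then [e] else [])"
  by (simp add: proj_def)

lemma split_append[simp]: "split (xs @ ys) = split xs @ split ys"
  by (simp add: split_def)

lemma split_Nil[simp]: "split [] = []"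
  by (simp add: split_def)

lemma split_single: "split [Msg p q m] = [Snd p q m, Rcv p q m]"
  by (simp add: split_def)

lemma proj_split_single: "proj r (split [Msg p q m]) =
   (if p = r then [Snd p q m] else []) @ (if q = r then [Rcv p q m] else [])"
  by (simp add: split_single proj_def)

lemma exec_append: "exec xi ins rem s (w @ v) =
  (case exec xi ins rem s w of None \<Rightarrow> None | Some s' \<Rightarrow> exec xi ins rem s' v)"
proof (induction w arbitrary: s)
  case Nil then show ?case by simp
next
  case (Cons a w)
  show ?case
  proof (cases a)
    case (Snd p q m)
    then show ?thesis by (cases "ins (p,q,m) (s (xi p q))") (simp_all add: Cons.IH fun_upd_def)
  next
    case (Rcv p q m)
    then show ?thesis by (cases "rem (p,q,m) (s (xi p q))") (simp_all add: Cons.IH fun_upd_def)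
  qed
qed

fun sendsOn :: "('p \<Rightarrow> 'p \<Rightarrow> 'c) \<Rightarrow> 'c \<Rightarrow> ('p, 'v) event list \<Rightarrow> ('p \<times> 'p \<times> 'v) list" where
  "sendsOn xi c [] = []"
| "sendsOn xi c (Snd a b m # w) = (if xi a b = c then [(a,b,m)] else []) @ sendsOn xi c w"
| "sendsOn xi c (Rcv a b m # w) = sendsOn xi c w"

fun rcvsOn :: "('p \<Rightarrow> 'p \<Rightarrow> 'c) \<Rightarrow> 'c \<Rightarrow> ('p, 'v) event list \<Rightarrow> ('p \<times> 'p \<times> 'v) list" where
  "rcvsOn xi c [] = []"
| "rcvsOn xi c (Rcv a b m # w) = (if xi a b = c then [(a,b,m)] else []) @ rcvsOn xi c w"
| "rcvsOn xi c (Snd a b m # w) = rcvsOn xi c w"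

lemma sendsOn_append[simp]: "sendsOn xi c (xs @ ys) = sendsOn xi c xs @ sendsOn xi c ys"
  by (induction xi c xs rule: sendsOn.induct) auto

lemma rcvsOn_append[simp]: "rcvsOn xi c (xs @ ys) = rcvsOn xi c xs @ rcvsOn xi c ys"
  by (induction xi c xs rule: rcvsOn.induct) auto

lemma sendsOn_split_rcvsOn: "sendsOn xi c (split xs) = rcvsOn xi c (split xs)"
proof (induction xs)
  case Nil then show ?case by simp
next
  case (Cons x xs)
  obtain p q m where "x = Msg p q m" by (cases x)
  then show ?case using Cons split_append[of "[x]" xs] by (simp add: split_single)
qed

lemma count_sendsOn: "count (mset (sendsOn xi c xs)) (a,b,m) =
   (if xi a b = c then count (mset xs) (Snd a b m) else 0)"
  by (induction xi c xs rule: sendsOn.induct) auto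

lemma count_rcvsOn: "count (mset (rcvsOn xi c xs)) (a,b,m) =
   (if xi a b = c then count (mset xs) (Rcv a b m) else 0)"
  by (induction xi c xs rule: rcvsOn.induct) auto

lemma count_split_SR: "count (mset (split xs)) (Snd a b m) = count (mset (split xs)) (Rcv a b m)"
  using count_sendsOn[of "\<lambda>_ _. ()" "()" "split xs" a b m]
        count_rcvsOn[of "\<lambda>_ _. ()" "()" "split xs" a b m]
        sendsOn_split_rcvsOn[of "\<lambda>_ _. ()" "()" xs]
  by simp

lemma rcvsOn_mono:
  assumes "mset xs \<subseteq># mset ys"
  shows "mset (rcvsOn xi c xs) \<subseteq># mset (rcvsOn xi c ys)"
  unfolding subseteq_mset_def
proof
  fix x :: "'a \<times> 'a \<times> 'b"
  obtain a b m where x: "x = (a,b,m)" by (cases x) auto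
  show "count (mset (rcvsOn xi c xs)) x \<le> count (mset (rcvsOn xi c ys)) x"
    using assms unfolding x count_rcvsOn subseteq_mset_def by auto
qed

lemma sendsOn_proj:
  assumes "\<And>a b. xi a b = c \<Longrightarrow> a = p"
  shows "sendsOn xi c (proj p w) = sendsOn xi c w"
proof (induction w)
  case Nil then show ?case by (simp add: proj_def)
next
  case (Cons e w)
  show ?case
  proof (cases e)
    case (Snd a b m)
    show ?thesis
    proof (cases "a = p")
      case True
      then show ?thesis using Cons.IH Snd by (simp add: proj_def)
    next
      case False
      then have "xi a b \<noteq> c" using assms by blast
      then show ?thesis using Cons.IH Snd False by (simp add: proj_def)
    qed
  next
    case (Rcv a b m)
    then show ?thesis using Cons.IH by (auto simp: proj_def)
  qed
qed

lemma fifo_inv: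
  "exec xi fifo_insert fifo_remove s w = Some s' \<Longrightarrow> s c @ sendsOn xi c w = rcvsOn xi c w @ s' c"
proof (induction w arbitrary: s)
  case Nil then show ?case by simp
next
  case (Cons e w)
  show ?case
  proof (cases e)
    case (Snd a b m)
    with Cons.prems have ex: "exec xi fifo_insert fifo_remove (s(xi a b := s (xi a b) @ [(a,b,m)])) w = Some s'"
      by (simp add: fifo_insert_def[abs_def])
    from Cons.IH[OF ex] Snd show ?thesis by (auto split: if_splits)
  next
    case (Rcv a b m)
    have pr: "exec xi fifo_insert fifo_remove s (Rcv a b m # w) = Some s'" using Cons.prems Rcv by simp
    obtain b' where h: "s (xi a b) = (a,b,m) # b'"
    proof (cases "s (xi a b)")
      case Nil then show ?thesis using pr by (simp add: fifo_remove_def)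
    next
      case (Cons x y) then show ?thesis using pr that by (simp add: fifo_remove_def split: if_splits)
    qed
    have ex: "exec xi fifo_insert fifo_remove (s(xi a b := b')) w = Some s'"
      using pr h by (simp add: fifo_remove_def)
    from Cons.IH[OF ex] h Rcv show ?thesis by (auto split: if_splits)
  qed
qed

lemma mset_aux: "x \<in># X \<Longrightarrow> X + Y - {#x#} = Z \<Longrightarrow> X + Y = add_mset x Z"
  by (metis insert_DiffM union_iff)

lemma bag_inv:
  "exec xi bag_insert bag_remove s w = Some s' \<Longrightarrow> s c + mset (sendsOn xi c w) = mset (rcvsOn xi c w) + s' c"
proof (induction w arbitrary: s)
  case Nil then show ?case by simp
next
  case (Cons e w)
  show ?case
  proof (cases e)
    case (Snd a b m)
    with Cons.prems have ex: "exec xi bag_insert bag_remove (s(xi a b := add_mset (a,b,m) (s (xi a b)))) w = Some s'"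
      by (simp add: bag_insert_def[abs_def])
    from Cons.IH[OF ex] Snd show ?thesis by (auto split: if_splits)
  next
    case (Rcv a b m)
    have pr: "exec xi bag_insert bag_remove s (Rcv a b m # w) = Some s'" using Cons.prems Rcv by simp
    have h: "(a,b,m) \<in># s (xi a b)"
      using pr by (simp add: bag_remove_def split: if_splits)
    have ex: "exec xi bag_insert bag_remove (s(xi a b := s (xi a b) - {#(a,b,m)#})) w = Some s'"
      using pr h by (simp add: bag_remove_def)
    from Cons.IH[OF ex] h Rcv show ?thesis
      by (auto split: if_splits intro: mset_aux)
  qed
qed


lemma fifo_rcv_ok:
  assumes sender: "\<And>a b a' b'. xi a b = xi a' b' \<Longrightarrow> a = a'"
  and ex: "exec xi fifo_insert fifo_remove (\<lambda>_. []) w = Some s"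
  and F1: "prefix (proj p (split \<alpha>) @ [Snd p q m]) (proj p w)"
  and F2: "count (mset w) (Rcv p q m) = count (mset (split \<alpha>)) (Rcv p q m)"
  and F3: "mset (split \<alpha>) \<subseteq># mset w"
  shows "\<exists>b'. s (xi p q) = (p,q,m) # b'"
proof -
  define c where "c = xi p q"
  define S where "S = sendsOn xi c w"
  define R where "R = rcvsOn xi c w"
  define A where "A = sendsOn xi c (split \<alpha>)"
  have inv: "S = R @ s c" using fifo_inv[OF ex, where c=c] by (simp add: S_def R_def)
  obtain z where z: "proj p w = proj p (split \<alpha>) @ Snd p q m # z" using F1 by (auto simp: prefix_def)
  have sp: "\<And>a b. xi a b = c \<Longrightarrow> a = p" unfolding c_def by (rule sender)
  have spr: "sendsOn xi c (proj p v) = sendsOn xi c v" for v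
    by (rule sendsOn_proj, erule sp)
  have "sendsOn xi c (proj p w) = sendsOn xi c (proj p (split \<alpha>)) @ (p,q,m) # sendsOn xi c z"
    unfolding z by (simp add: c_def)
  then have SA: "S = A @ (p,q,m) # sendsOn xi c z"
    unfolding S_def A_def using spr[of w] spr[of "split \<alpha>"] by simp
  have k1: "count (mset A) (p,q,m) = count (mset R) (p,q,m)"
    using count_sendsOn[of xi c "split \<alpha>" p q m] count_rcvsOn[of xi c w p q m] F2 count_split_SR[of \<alpha> p q m]
    by (simp add: A_def R_def c_def)
  have le1: "length R \<le> length A"
  proof (rule ccontr)
    assume "\<not> ?thesis"
    then have "Suc (length A) \<le> length R" by simp
    then have t1: "take (Suc (length A)) S = take (Suc (length A)) R" using inv by simp
    have t2: "take (Suc (length A)) S = A @ [(p,q,m)]" by (simp add: SA)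
    have "prefix (take (Suc (length A)) R) R" by (rule take_is_prefix)
    then have "prefix (A @ [(p,q,m)]) R" using t1 t2 by simp
    then have "count (mset (A @ [(p,q,m)])) (p,q,m) \<le> count (mset R) (p,q,m)" by (rule prefix_count)
    then show False using k1 by simp
  qed
  have "mset A \<subseteq># mset R"
    using rcvsOn_mono[OF F3, where xi=xi and c=c] sendsOn_split_rcvsOn[of xi c \<alpha>] by (simp add: A_def R_def)
  then have "length A \<le> length R" using size_mset_mono by fastforce
  with le1 have "length R = length A" by simp
  then have "s c = (p,q,m) # sendsOn xi c z" using inv SA by simp
  then show ?thesis by (simp add: c_def)
qed

lemma bag_rcv_ok:
  assumes ex: "exec xi bag_insert bag_remove (\<lambda>_. {#}) w = Some s"
  and F1: "prefix (proj p (split \<alpha>) @ [Snd p q m]) (proj p w)"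
  and F2: "count (mset w) (Rcv p q m) = count (mset (split \<alpha>)) (Rcv p q m)"
  shows "(p,q,m) \<in># s (xi p q)"
proof -
  define c where "c = xi p q"
  have inv: "mset (sendsOn xi c w) = mset (rcvsOn xi c w) + s c" using bag_inv[OF ex, where c=c] by simp
  obtain z where z: "proj p w = proj p (split \<alpha>) @ Snd p q m # z" using F1 by (auto simp: prefix_def)
  have "count (mset (sendsOn xi c w)) (p,q,m) = count (mset w) (Snd p q m)"
    by (simp add: count_sendsOn c_def)
  also have "\<dots> = count (mset (proj p w)) (Snd p q m)" using count_proj[of "Snd p q m" w] by simp
  also have "\<dots> \<ge> count (mset (proj p (split \<alpha>))) (Snd p q m) + 1" unfolding z by simp
  finally have a: "count (mset (sendsOn xi c w)) (p,q,m) \<ge> count (mset (split \<alpha>)) (Snd p q m) + 1"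
    using count_proj[of "Snd p q m" "split \<alpha>"] by simp
  have b: "count (mset (rcvsOn xi c w)) (p,q,m) = count (mset (split \<alpha>)) (Snd p q m)"
    using F2 count_split_SR[of \<alpha> p q m] by (simp add: count_rcvsOn c_def)
  have "count (s c) (p,q,m) \<ge> 1" using a b inv
    by (metis add_le_cancel_left count_union)
  then show ?thesis by (simp add: c_def)
qed

lemma cc_snd: "channel_compliant xi ins rem b0 w \<Longrightarrow> (\<And>\<mu> b. ins \<mu> b \<noteq> None)
   \<Longrightarrow> channel_compliant xi ins rem b0 (w@[Snd p q m])"
  unfolding channel_compliant_def by (auto simp: exec_append split: option.splits) (metis option.distinct(1))

lemma cc_rcv: "exec xi ins rem (\<lambda>_. b0) w = Some s \<Longrightarrow> rem (p,q,m) (s (xi p q)) \<noteq> None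
   \<Longrightarrow> channel_compliant xi ins rem b0 (w@[Rcv p q m])"
  unfolding channel_compliant_def by (auto simp: exec_append split: option.splits)

lemma compliant_snd: "compliant A w \<Longrightarrow> compliant A (w@[Snd p q m])"
  by (cases A) (auto simp: compliant_def fifo_insert_def bag_insert_def intro!: cc_snd)

lemma compliant_rcv:
  assumes co: "compliant A w"
  and F1: "prefix (proj p (split \<alpha>) @ [Snd p q m]) (proj p w)"
  and F2: "count (mset w) (Rcv p q m) = count (mset (split \<alpha>)) (Rcv p q m)"
  and F3: "mset (split \<alpha>) \<subseteq># mset w"
  shows "compliant A (w@[Rcv p q m])"
proof (cases A)
  case P2P
  then obtain s where ex: "exec (\<lambda>p q. (p, q)) fifo_insert fifo_remove (\<lambda>_. []) w = Some s"
    using co by (auto simp: compliant_def channel_compliant_def)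
  obtain b' where "s (p,q) = (p,q,m) # b'"
    using fifo_rcv_ok[of "\<lambda>p q. (p, q)", OF _ ex F1 F2 F3] by auto
  then have "channel_compliant (\<lambda>p q. (p, q)) fifo_insert fifo_remove [] (w@[Rcv p q m])"
    by (intro cc_rcv[OF ex]) (simp add: fifo_remove_def)
  then show ?thesis using P2P by (simp add: compliant_def)
next
  case SB
  then obtain s where ex: "exec (\<lambda>p q. p) fifo_insert fifo_remove (\<lambda>_. []) w = Some s"
    using co by (auto simp: compliant_def channel_compliant_def)
  obtain b' where "s p = (p,q,m) # b'"
    using fifo_rcv_ok[of "\<lambda>p q. p", OF _ ex F1 F2 F3] by auto
  then have "channel_compliant (\<lambda>p q. p) fifo_insert fifo_remove [] (w@[Rcv p q m])"
    by (intro cc_rcv[OF ex]) (simp add: fifo_remove_def)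
  then show ?thesis using SB by (simp add: compliant_def)
next
  case BAG
  then obtain s where ex: "exec (\<lambda>p q. ()) bag_insert bag_remove (\<lambda>_. {#}) w = Some s"
    using co by (auto simp: compliant_def channel_compliant_def)
  have "(p,q,m) \<in># s ()"
    using bag_rcv_ok[OF ex F1 F2] by simp
  then have "channel_compliant (\<lambda>p q. ()) bag_insert bag_remove {#} (w@[Rcv p q m])"
    by (intro cc_rcv[OF ex]) (simp add: bag_remove_def)
  then show ?thesis using BAG by (simp add: compliant_def)
qed


lemma prefix_step:
  assumes 1: "prefix xs ys" and 2: "prefix ys (xs @ x # zs)" and 3: "ys \<noteq> xs"
  shows "prefix (xs @ [x]) ys"
proof -
  from 1 obtain a where ys: "ys = xs @ a" by (auto simp: prefix_def)
  from 2 obtain b where "xs @ x # zs = ys @ b" by (auto simp: prefix_def)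
  then have "a @ b = x # zs" using ys by simp
  moreover have "a \<noteq> []" using 3 ys by simp
  ultimately obtain a' where "a = x # a'" by (cases a) auto
  then show ?thesis using ys by (simp add: prefix_def)
qed

lemma prefix_stuck: "prefix xs ys \<Longrightarrow> prefix ys (xs @ x # zs) \<Longrightarrow> \<not> prefix (xs @ [x]) ys \<Longrightarrow> ys = xs"
  using prefix_step by metis

lemma step:
  assumes ag: "agrees w \<rho>" and ne: "\<not> equiv_words w (split \<rho>)" and co: "compliant A w"
  shows "\<exists>e. compliant A (w@[e]) \<and> agrees (w@[e]) \<rho>"
proof -
  define D where "D = (\<lambda>i. \<forall>r. prefix (proj r (split (take i \<rho>))) (proj r w))"
  define K where "K = {i. i \<le> length \<rho> \<and> D i}"
  define I where "I = Max K"
  have fin: "finite K" unfolding K_def by (rule finite_subset[of _ "{..length \<rho>}"]) auto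
  have D0: "0 \<in> K" by (simp add: D_def K_def)
  have I_in: "I \<le> length \<rho> \<and> D I" using Max_in[OF fin] D0 unfolding I_def K_def by blast
  have I_max: "\<And>i. i \<le> length \<rho> \<Longrightarrow> D i \<Longrightarrow> i \<le> I" using Max_ge[OF fin] unfolding I_def K_def by blast
  have Ilt: "I < length \<rho>"
  proof (rule ccontr)
    assume "\<not> I < length \<rho>"
    then have "I = length \<rho>" using I_in by simp
    then have "\<forall>r. prefix (proj r (split \<rho>)) (proj r w)" using I_in by (simp add: D_def)
    then have "equiv_words w (split \<rho>)" using ag unfolding agrees_def equiv_words_def
      by (metis prefix_order.antisym)
    then show False using ne by simp
  qed
  define \<alpha> where "\<alpha> = take I \<rho>"
  define \<beta> where "\<beta> = drop (Suc I) \<rho>"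
  obtain p q m where \<mu>: "\<rho> ! I = Msg p q m" by (cases "\<rho> ! I")
  have \<rho>eq: "\<rho> = \<alpha> @ [Msg p q m] @ \<beta>"
    using id_take_nth_drop[OF Ilt] \<mu> unfolding \<alpha>_def \<beta>_def by simp
  have spl: "split \<rho> = split \<alpha> @ split [Msg p q m] @ split \<beta>"
    by (subst \<rho>eq) (simp only: split_append)
  have F3: "\<forall>r. prefix (proj r (split \<alpha>)) (proj r w)" using I_in by (simp add: D_def \<alpha>_def)
  have F4: "\<forall>r. prefix (proj r w) (proj r (split \<alpha>) @ proj r (split [Msg p q m]) @ proj r (split \<beta>))"
    using ag unfolding agrees_def spl proj_append by blast
  have "\<not> D (Suc I)" using I_max[of "Suc I"] Ilt by auto
  moreover have "take (Suc I) \<rho> = \<alpha> @ [Msg p q m]" using take_Suc_conv_app_nth[OF Ilt] \<mu> \<alpha>_def by simp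
  ultimately obtain r0 where r0: "\<not> prefix (proj r0 (split \<alpha>) @ proj r0 (split [Msg p q m])) (proj r0 w)"
    unfolding D_def by auto
  show ?thesis
  proof (cases "proj p w = proj p (split \<alpha>)")
    case True
    have "agrees (w @ [Snd p q m]) \<rho>"
      unfolding agrees_def
    proof
      fix r
      show "prefix (proj r (w @ [Snd p q m])) (proj r (split \<rho>))"
      proof (cases "r = p")
        case True
        then show ?thesis using \<open>proj p w = proj p (split \<alpha>)\<close>
          unfolding spl by (simp add: proj_split_single)
      next
        case False
        then show ?thesis using ag by (simp add: agrees_def proj_def)
      qed
    qed
    then show ?thesis using compliant_snd[OF co] by blast
  next
    case False
    have F4p: "prefix (proj p w) (proj p (split \<alpha>) @ Snd p q m # ((if q = p then [Rcv p q m] else []) @ proj p (split \<beta>)))"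
      using F4[rule_format, of p] by (simp add: proj_split_single)
    have F1: "prefix (proj p (split \<alpha>) @ [Snd p q m]) (proj p w)"
      using prefix_step[OF F3[rule_format, of p] F4p False] .
    have F2': "proj q w = proj q (split \<alpha>) @ (if q = p then [Snd p q m] else [])"
    proof (cases "q = p")
      case True
      have "r0 = p"
      proof (rule ccontr)
        assume "r0 \<noteq> p"
        then have "proj r0 (split [Msg p q m]) = []" using True by (simp add: proj_split_single)
        then show False using r0 F3 by simp
      qed
      then have n: "\<not> prefix ((proj p (split \<alpha>) @ [Snd p q m]) @ [Rcv p q m]) (proj p w)"
        using r0 True by (simp add: proj_split_single)
      have F4p': "prefix (proj p w) ((proj p (split \<alpha>) @ [Snd p q m]) @ Rcv p q m # proj p (split \<beta>))"
        using F4p True by simp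
      have "proj p w = proj p (split \<alpha>) @ [Snd p q m]"
        using prefix_stuck[OF F1 F4p' n] .
      then show ?thesis using True by simp
    next
      case qp: False
      have "r0 = q"
      proof (rule ccontr)
        assume nq: "r0 \<noteq> q"
        show False
        proof (cases "r0 = p")
          case True
          then have "proj r0 (split [Msg p q m]) = [Snd p q m]" using qp by (simp add: proj_split_single)
          then show False using r0 F1 True by simp
        next
          case False
          then have "proj r0 (split [Msg p q m]) = []" using nq by (simp add: proj_split_single)
          then show False using r0 F3 by simp
        qed
      qed
      then have n: "\<not> prefix (proj q (split \<alpha>) @ [Rcv p q m]) (proj q w)"
        using r0 qp by (simp add: proj_split_single)
      have F4q: "prefix (proj q w) (proj q (split \<alpha>) @ Rcv p q m # proj q (split \<beta>))"
        using F4[rule_format, of q] qp by (simp add: proj_split_single)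
      have "proj q w = proj q (split \<alpha>)"
        using prefix_stuck[OF F3[rule_format, of q] F4q n] .
      then show ?thesis using qp by simp
    qed
    have "count (mset w) (Rcv p q m) = count (mset (proj q w)) (Rcv p q m)"
      using count_proj[of "Rcv p q m" w] by simp
    also have "\<dots> = count (mset (proj q (split \<alpha>))) (Rcv p q m)" using F2' by simp
    also have "\<dots> = count (mset (split \<alpha>)) (Rcv p q m)"
      using count_proj[of "Rcv p q m" "split \<alpha>"] by simp
    finally have F2: "count (mset w) (Rcv p q m) = count (mset (split \<alpha>)) (Rcv p q m)" .
    have F3': "mset (split \<alpha>) \<subseteq># mset w" using mset_sub F3 by blast
    have "agrees (w @ [Rcv p q m]) \<rho>"
      unfolding agrees_def
    proof
      fix r
      show "prefix (proj r (w @ [Rcv p q m])) (proj r (split \<rho>))"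
      proof (cases "r = q")
        case True
        then show ?thesis using F2'
          unfolding spl by (simp add: proj_split_single)
      next
        case False
        then show ?thesis using ag by (simp add: agrees_def proj_def)
      qed
    qed
    then show ?thesis using compliant_rcv[OF co F1 F2 F3'] by blast
  qed
qed

lemma len_bound: "agrees w \<rho> \<Longrightarrow> length w \<le> length (split \<rho>)"
  unfolding agrees_def by (metis mset_sub size_mset size_mset_mono)

theorem lemma7p5:
  fixes A :: arch and \<rho> :: "('p, 'v) msg list" and w :: "('p, 'v) event list"
  assumes "compliant A w" and "agrees w \<rho>"
  shows "\<exists>u. compliant A (w @ u) \<and> equiv_words (w @ u) (split \<rho>)"
proof -
  have "\<And>w. length (split \<rho>) - length w = n \<Longrightarrow> compliant A w \<Longrightarrow> agrees w \<rho> \<Longrightarrow>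
      \<exists>u. compliant A (w @ u) \<and> equiv_words (w @ u) (split \<rho>)" for n
  proof (induction n rule: less_induct)
    case (less n)
    show ?case
    proof (cases "equiv_words w (split \<rho>)")
      case True
      then show ?thesis using less.prems by (intro exI[of _ "[]"]) simp
    next
      case False
      then obtain e where e: "compliant A (w@[e])" "agrees (w@[e]) \<rho>"
        using step less.prems by blast
      have "length (w@[e]) \<le> length (split \<rho>)" using len_bound[OF e(2)] .
      then have "length (split \<rho>) - length (w@[e]) < n" using less.prems by simp
      from less.IH[OF this refl e] obtain u where
        "compliant A (w @ [e] @ u) \<and> equiv_words (w @ [e] @ u) (split \<rho>)" by auto
      then show ?thesis by blast
    qed
  qed
  then show ?thesis using assms by blast
qed

end
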